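(* In the induced continuum market $\widehat\Gamma$, let $M$ be a stable pseudo-matching, choose $f'\in F$, and let $M'$ be a pseudo-matching such that $M'_{f'}(w)=0$ whenever $M_{f'}(w)=0$ ($w\in W$), and $M'_f=M_f$ for all $f\ne f'$. Then in $M'$ there is no blocking coalition involving any firm $f\in F$ with $f\neq f'$; that is, there are no $f\in F\setminus\{f'\}$ and $M''\in[0,1]^W$ with $M''\succ_f M'_f$ and $M''\le A^{\preceq f}(M')$.
   Context: Finite firms $F$, finite workers $W=\{w_1,\dots,w_n\}$, null firm $\o$, $\widetilde F=F\cup\{\o\}$; each worker $w$ has a strict complete transitive preference $\succ_w$ over $\widetilde F$ ($f\succeq_w f'$ means $f\succ_w f'$ or $f=f'$); each firm $f\in F$ has a strict complete transitive preference $\succ_f$ over $2^W$, subsets identified with indicator vectors. For $f\in F$ list the sets $S\succ_f\emptyset$ as $\mathbf u^1\succ_f\cdots\succ_f\mathbf u^L$. For $\mathbf x\in[0,1]^W$: $t_0=0$, $\mathbf z^0=\mathbf x$, $t_k=\min\{1-\sum_{j<k}t_j,\ z^{k-1}_i: u^k_i\ne 0\}$, $\mathbf z^k=\mathbf z^{k-1}-t_k\mathbf u^k$, $\widehat{Ch}_f(\mathbf x)=\sum_{k=1}^L t_k\mathbf u^k$; $\widehat{Ch}_{\o}(\mathbf x)=\mathbf x$. A pseudo-matching is $M=(M_f)_{f\in\widetilde F}$ with $M_f\in[0,1]^W$. $\vee$ is componentwise max, $\le$ componentwise. $M''\succ_f M_f$ means $M''=\widehat{Ch}_f(M''\vee M_f)$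 and $M''\ne M_f$. $A^{\preceq f}(M)(w)=\sum_{f''\in\widetilde F:f\succeq_w f''}M_{f''}(w)$. A pseudo-matching $M$ is stable if (i) $M_f=\widehat{Ch}_f(M_f)$ for each $f\in F$ and $M_f(w)=0$ whenever $\o\succ_w f$; (ii) there are no $f\in F$, $M''\in[0,1]^W$ with $M''\succ_f M_f$ and $M''\le A^{\preceq f}(M)$. *)

theory Defs
  imports Complex_Main
begin

(* Conventions:
   - workers are the elements of a finite type 'w  (W = UNIV);
   - firms are the elements of a finite type 'f   (F = UNIV);
   - the extended firm set F~ = F \<union> {null} is  'f option, with None = null firm;
   - a pseudo-matching is  M :: 'f option \<Rightarrow> 'w \<Rightarrow> real;
   - a vector x \<in> [0,1]^W is a function  'w \<Rightarrow> real;
   - subsets of W are identified with their indicator vectors.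
   - pw w a b  means  a \<succ>_w b  (strict preference of worker w over F~);
   - pf f S T  means  S \<succ>_f T  (strict preference of firm f over 2^W). *)

definition strict_linear :: "('a \<Rightarrow> 'a \<Rightarrow> bool) \<Rightarrow> bool" where
  "strict_linear P \<longleftrightarrow> (\<forall>x. \<not> P x x) \<and> (\<forall>x y z. P x y \<longrightarrow> P y z \<longrightarrow> P x z)
      \<and> (\<forall>x y. x \<noteq> y \<longrightarrow> P x y \<or> P y x)"

definition unit_vec :: "('w \<Rightarrow> real) \<Rightarrow> bool" where
  "unit_vec x \<longleftrightarrow> (\<forall>w. 0 \<le> x w \<and> x w \<le> 1)"

definition acc_list :: "('f \<Rightarrow> 'w set \<Rightarrow> 'w set \<Rightarrow> bool) \<Rightarrow> 'f \<Rightarrow> 'w set list" where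
  "acc_list pf f = (SOME us. distinct us \<and> set us = {S. pf f S {}} \<and> sorted_wrt (pf f) us)"

(* greedy step: z = current z^{k-1}, r = 1 - \<Sum>_{j<k} t_j, remaining list u^k, ... *)
fun ch_aux :: "('w::finite \<Rightarrow> real) \<Rightarrow> real \<Rightarrow> 'w set list \<Rightarrow> ('w \<Rightarrow> real)" where
  "ch_aux z r [] = (\<lambda>w. 0)"
| "ch_aux z r (u # us) =
     (let t = Min (insert r (z ` u)) in
       (\<lambda>w. (if w \<in> u then t else 0) + ch_aux (\<lambda>v. z v - (if v \<in> u then t else 0)) (r - t) us w))"

definition Ch :: "('f \<Rightarrow> 'w set \<Rightarrow> 'w set \<Rightarrow> bool) \<Rightarrow> 'f \<Rightarrow> ('w::finite \<Rightarrow> real) \<Rightarrow> ('w \<Rightarrow> real)" where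
  "Ch pf f x = ch_aux x 1 (acc_list pf f)"

definition firm_prefers ::
  "('f \<Rightarrow> 'w set \<Rightarrow> 'w set \<Rightarrow> bool) \<Rightarrow> 'f \<Rightarrow> ('w::finite \<Rightarrow> real) \<Rightarrow> ('w \<Rightarrow> real) \<Rightarrow> bool" where
  "firm_prefers pf f M'' Mf \<longleftrightarrow> M'' = Ch pf f (\<lambda>w. max (M'' w) (Mf w)) \<and> M'' \<noteq> Mf"

definition avail ::
  "('w \<Rightarrow> 'f option \<Rightarrow> 'f option \<Rightarrow> bool) \<Rightarrow> ('f::finite option \<Rightarrow> 'w \<Rightarrow> real) \<Rightarrow> 'f option \<Rightarrow> 'w \<Rightarrow> real" where
  "avail pw M f w = (\<Sum>g \<in> {g. pw w f g \<or> f = g}. M g w)"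

definition pseudo_matching :: "('f option \<Rightarrow> 'w \<Rightarrow> real) \<Rightarrow> bool" where
  "pseudo_matching M \<longleftrightarrow> (\<forall>g. unit_vec (M g))"

definition blocks ::
  "('w \<Rightarrow> 'f option \<Rightarrow> 'f option \<Rightarrow> bool) \<Rightarrow> ('f \<Rightarrow> 'w set \<Rightarrow> 'w set \<Rightarrow> bool)
     \<Rightarrow> ('f::finite option \<Rightarrow> 'w::finite \<Rightarrow> real) \<Rightarrow> 'f \<Rightarrow> ('w \<Rightarrow> real) \<Rightarrow> bool" where
  "blocks pw pf M f M'' \<longleftrightarrow> unit_vec M'' \<and> firm_prefers pf f M'' (M (Some f))
       \<and> (\<forall>w. M'' w \<le> avail pw M (Some f) w)"

definition stable ::
  "('w \<Rightarrow> 'f option \<Rightarrow> 'f option \<Rightarrow> bool) \<Rightarrow> ('f \<Rightarrow> 'w set \<Rightarrow> 'w set \<Rightarrow> bool)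
     \<Rightarrow> ('f::finite option \<Rightarrow> 'w::finite \<Rightarrow> real) \<Rightarrow> bool" where
  "stable pw pf M \<longleftrightarrow>
     (\<forall>f. M (Some f) = Ch pf f (M (Some f)))
   \<and> (\<forall>f w. pw w None (Some f) \<longrightarrow> M (Some f) w = 0)
   \<and> \<not> (\<exists>f M''. blocks pw pf M f M'')"

end

theory Submission
  imports Defs
begin

fun vec :: "'w set list \<Rightarrow> real list \<Rightarrow> 'w \<Rightarrow> real" where
  "vec (u#us) (t#ts) = (\<lambda>w. (if w\<in>u then t else 0) + vec us ts w)"
| "vec _ _ = (\<lambda>w. 0)"

fun gt :: "('w::finite \<Rightarrow> real) \<Rightarrow> real \<Rightarrow> 'w set list \<Rightarrow> real list" where
  "gt z r [] = []"
| "gt z r (u # us) = (let t = Min (insert r (z ` u)) in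
      t # gt (\<lambda>v. z v - (if v \<in> u then t else 0)) (r - t) us)"

fun lexle :: "real list \<Rightarrow> real list \<Rightarrow> bool" where
  "lexle (a#as) (b#bs) = (a < b \<or> (a = b \<and> lexle as bs))"
| "lexle _ _ = True"

definition feas :: "('w \<Rightarrow> real) \<Rightarrow> real \<Rightarrow> 'w set list \<Rightarrow> real list \<Rightarrow> bool" where
  "feas z r us ts \<longleftrightarrow> length ts = length us \<and> (\<forall>t\<in>set ts. 0 \<le> t) \<and> sum_list ts \<le> r
     \<and> (\<forall>w. vec us ts w \<le> z w)"

lemma ch_vec: "ch_aux z r us = vec us (gt z r us)"
  by (induction us arbitrary: z r) (auto simp: Let_def)

lemma vec_nonneg: "\<forall>t\<in>set ts. 0 \<le> t \<Longrightarrow> 0 \<le> vec us ts w"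
  by (induction us ts rule: vec.induct) auto

lemma sum_nonneg: "\<forall>t\<in>set ts. 0 \<le> (t::real) \<Longrightarrow> 0 \<le> sum_list ts"
  by (induction ts) auto

lemma gt_feas: "\<forall>w. 0 \<le> z w \<Longrightarrow> 0 \<le> r \<Longrightarrow> feas z r us (gt z r us)"
proof (induction us arbitrary: z r)
  case Nil
  then show ?case by (simp add: feas_def)
next
  case (Cons u us)
  define t where "t = Min (insert r (z ` u))"
  have fin: "finite (insert r (z ` u))" by simp
  have t0: "0 \<le> t" unfolding t_def using Cons.prems fin by (auto simp: Min_ge_iff)
  have tr: "t \<le> r" unfolding t_def using fin by simp
  have tz: "\<And>v. v \<in> u \<Longrightarrow> t \<le> z v" unfolding t_def using fin by simp
  define z' where "z' = (\<lambda>v. z v - (if v \<in> u then t else 0))"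
  have "\<forall>w. 0 \<le> z' w" using tz Cons.prems unfolding z'_def by auto
  then have IH: "feas z' (r - t) us (gt z' (r - t) us)" using Cons.IH tr by simp
  have "gt z r (u # us) = t # gt z' (r - t) us" unfolding t_def z'_def by (simp add: Let_def)
  then show ?case using IH t0 unfolding feas_def z'_def by (auto simp: algebra_simps)
qed

lemma gt_max: "feas z r us ts \<Longrightarrow> lexle ts (gt z r us)"
proof (induction us arbitrary: z r ts)
  case Nil
  then show ?case by (simp add: feas_def)
next
  case (Cons u us)
  then obtain s ss where ts: "ts = s # ss" unfolding feas_def by (cases ts) auto
  define t where "t = Min (insert r (z ` u))"
  have fin: "finite (insert r (z ` u))" by simp
  define z' where "z' = (\<lambda>v. z v - (if v \<in> u then t else 0))"
  have g: "gt z r (u # us) = t # gt z' (r - t) us" unfolding t_def z'_def by (simp add: Let_def)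
  have F: "length ss = length us" "\<forall>x\<in>set ss. 0 \<le> x" "s \<ge> 0" "s + sum_list ss \<le> r"
     "\<And>w. (if w\<in>u then s else 0) + vec us ss w \<le> z w"
    using Cons.prems ts unfolding feas_def by auto
  have sr: "s \<le> r" using F sum_nonneg[of ss] by linarith
  have sz: "s \<le> z v" if "v \<in> u" for v
  proof -
    have "s + vec us ss v \<le> z v" using F(5)[of v] that by simp
    moreover have "0 \<le> vec us ss v" using vec_nonneg[OF F(2)] .
    ultimately show ?thesis by linarith
  qed
  have st: "s \<le> t" unfolding t_def using sr sz fin by (auto simp: Min_ge_iff)
  show ?case
  proof (cases "s < t")
    case True then show ?thesis using g ts by simp
  next
    case False
    then have "s = t" using st by simp
    have "vec us ss w \<le> z' w" for w
    proof (cases "w \<in> u")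
      case True then show ?thesis using F(5)[of w] \<open>s = t\<close> unfolding z'_def by simp
    next
      case False then show ?thesis using F(5)[of w] unfolding z'_def by simp
    qed
    moreover have "sum_list ss \<le> r - t" using F(4) \<open>s = t\<close> by linarith
    ultimately have "feas z' (r - t) us ss" using F(1,2) unfolding feas_def by blast
    then have "lexle ss (gt z' (r - t) us)" by (rule Cons.IH)
    then show ?thesis unfolding ts g using \<open>s = t\<close> by simp
  qed
qed

lemma lex_antisym: "length a = length b \<Longrightarrow> lexle a b \<Longrightarrow> lexle b a \<Longrightarrow> a = b"
  by (induction a b rule: list_induct2) auto

lemma lex_trans: "lexle a b \<Longrightarrow> lexle b c \<Longrightarrow> length a = length b \<Longrightarrow> length b = length c \<Longrightarrow> lexle a c"
proof (induction a arbitrary: b c)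
  case Nil then show ?case by simp
next
  case (Cons x xs)
  then obtain y ys z zs where bc: "b = y # ys" "c = z # zs" by (cases b; cases c) auto
  have h1: "x < y \<or> (x = y \<and> lexle xs ys)" using Cons.prems(1) bc by simp
  have h2: "y < z \<or> (y = z \<and> lexle ys zs)" using Cons.prems(2) bc by simp
  have l: "length xs = length ys" "length ys = length zs" using Cons.prems(3,4) bc by auto
  have "x < z \<or> (x = z \<and> lexle xs zs)"
  proof (cases "x < y \<or> y < z")
    case True then show ?thesis using h1 h2 by auto
  next
    case False
    then have "x = y" "y = z" "lexle xs ys" "lexle ys zs" using h1 h2 by auto
    then show ?thesis using Cons.IH[OF _ _ l] by simp
  qed
  then show ?case using bc by simp
qed

lemma lex_conv: "length a = length b \<Longrightarrow> lexle a b \<Longrightarrow> 0 < e \<Longrightarrow>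
   lexle a (map2 (\<lambda>x y. (1-e)*x + e*y) a b)"
proof (induction a b rule: list_induct2)
  case Nil then show ?case by simp
next
  case (Cons x xs y ys)
  show ?case
  proof (cases "x < y")
    case True
    then have "0 < e*(y-x)" using Cons.prems by simp
    then have "x < (1-e)*x + e*y" by (simp add: algebra_simps)
    then show ?thesis by simp
  next
    case False
    then have xy: "x = y" "lexle xs ys" using Cons.prems by auto
    have "(1-e)*x + e*y = x" using xy by (simp add: algebra_simps)
    then show ?thesis using Cons.IH[OF xy(2) Cons.prems(2)] by simp
  qed
qed

lemma conv_eq: "length a = length (b::real list) \<Longrightarrow> 0 < e \<Longrightarrow>
   map2 (\<lambda>x y. (1-e)*x + e*y) a b = a \<Longrightarrow> a = b"
proof (induction a b rule: list_induct2)
  case Nil then show ?case by simp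
next
  case (Cons x xs y ys)
  then have h: "(1-e)*x + e*y = x" "map2 (\<lambda>x y. (1-e)*x + e*y) xs ys = xs" by auto
  from h(1) have "e * (y - x) = 0" by (simp add: algebra_simps)
  then have "x = y" using Cons.prems by simp
  then show ?case using Cons h by simp
qed

lemma vec_conv: "length a = length us \<Longrightarrow> length b = length us \<Longrightarrow>
   vec us (map2 (\<lambda>x y. (1-e)*x + e*y) a b) w = (1-e) * vec us a w + e * vec us b w"
proof (induction us arbitrary: a b)
  case Nil then show ?case by simp
next
  case (Cons u us)
  then obtain x xs y ys where ab: "a = x # xs" "b = y # ys" by (cases a; cases b) auto
  have IH: "vec us (map2 (\<lambda>x y. (1-e)*x + e*y) xs ys) w = (1-e) * vec us xs w + e * vec us ys w"
    using Cons ab by simp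
  show ?case using IH ab by (cases "w \<in> u") (simp_all add: algebra_simps)
qed

lemma sum_conv: "length a = length (b::real list) \<Longrightarrow>
   sum_list (map2 (\<lambda>x y. (1-e)*x + e*y) a b) = (1-e) * sum_list a + e * sum_list b"
  by (induction a b rule: list_induct2) (simp_all add: algebra_simps)


lemma feas_mono: "feas z r us ts \<Longrightarrow> \<forall>w. z w \<le> z' w \<Longrightarrow> feas z' r us ts"
proof -
  assume A: "feas z r us ts" "\<forall>w. z w \<le> z' w"
  have "vec us ts w \<le> z' w" for w using A unfolding feas_def by (meson order_trans)
  then show ?thesis using A(1) unfolding feas_def by blast
qed

lemma feas_vec: "feas z r us ts \<Longrightarrow> feas (vec us ts) r us ts"
  unfolding feas_def by simp

lemma map2_nonneg: "length a = length (b::real list) \<Longrightarrow> \<forall>t\<in>set a. 0 \<le> t \<Longrightarrow> \<forall>t\<in>set b. 0 \<le> t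
  \<Longrightarrow> 0 \<le> e \<Longrightarrow> e \<le> 1 \<Longrightarrow> \<forall>t\<in>set (map2 (\<lambda>x y. (1-e)*x + e*y) a b). 0 \<le> t"
proof (induction a b rule: list_induct2)
  case Nil then show ?case by simp
next
  case (Cons x xs y ys)
  have p1: "\<forall>t\<in>set xs. 0 \<le> t" "\<forall>t\<in>set ys. 0 \<le> t" "0 \<le> x" "0 \<le> y"
    using Cons.prems(1,2) by auto
  have IH: "\<forall>t\<in>set (map2 (\<lambda>x y. (1-e)*x + e*y) xs ys). 0 \<le> t"
    using Cons.IH[OF p1(1,2) Cons.prems(3,4)] .
  have "0 \<le> (1-e)*x" using p1(3) Cons.prems(4) by simp
  moreover have "0 \<le> e*y" using p1(4) Cons.prems(3) by simp
  ultimately have h: "0 \<le> (1-e)*x + e*y" by linarith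
  show ?case using IH h by simp
qed

lemma feas_conv: "feas z1 r us a \<Longrightarrow> feas z2 r us b \<Longrightarrow> 0 \<le> e \<Longrightarrow> e \<le> 1 \<Longrightarrow>
  feas (\<lambda>w. (1-e) * z1 w + e * z2 w) r us (map2 (\<lambda>x y. (1-e)*x + e*y) a b)"
proof -
  assume A: "feas z1 r us a" "feas z2 r us b" "0 \<le> e" "e \<le> 1"
  have l: "length a = length us" "length b = length us" using A unfolding feas_def by auto
  have s: "sum_list (map2 (\<lambda>x y. (1-e)*x + e*y) a b) = (1-e) * sum_list a + e * sum_list b"
    using sum_conv l by simp
  have sa: "sum_list a \<le> r" "sum_list b \<le> r" using A unfolding feas_def by auto
  have "(1-e) * sum_list a + e * sum_list b \<le> (1-e) * r + e * r"
    using A(3,4) sa by (intro add_mono mult_left_mono) auto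
  then have S: "sum_list (map2 (\<lambda>x y. (1-e)*x + e*y) a b) \<le> r" using s by (simp add: algebra_simps)
  have V: "\<forall>w. vec us (map2 (\<lambda>x y. (1-e)*x + e*y) a b) w \<le> (1-e) * z1 w + e * z2 w"
  proof
    fix w
    have "vec us a w \<le> z1 w" "vec us b w \<le> z2 w" using A unfolding feas_def by auto
    then have "(1-e) * vec us a w + e * vec us b w \<le> (1-e) * z1 w + e * z2 w"
      using A(3,4) by (intro add_mono mult_left_mono) auto
    then show "vec us (map2 (\<lambda>x y. (1-e)*x + e*y) a b) w \<le> (1-e) * z1 w + e * z2 w"
      using vec_conv[OF l, of e w] by simp
  qed
  have N: "\<forall>t\<in>set (map2 (\<lambda>x y. (1-e)*x + e*y) a b). 0 \<le> t"
    using map2_nonneg[of a b e] l A unfolding feas_def by auto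
  show ?thesis using S V N l unfolding feas_def by simp
qed

lemma avail_ge:
  fixes M :: "'f::finite option \<Rightarrow> 'w \<Rightarrow> real"
  assumes "pseudo_matching M"
  shows "M (Some f) w \<le> avail pw M (Some f) w"
proof -
  have "M (Some f) w = (\<Sum>g\<in>{Some f}. M g w)" by simp
  also have "\<dots> \<le> avail pw M (Some f) w" unfolding avail_def
    using assms unfolding pseudo_matching_def unit_vec_def
    by (intro sum_mono2) auto
  finally show ?thesis .
qed

theorem lemma5:
  fixes pw :: "'w::finite \<Rightarrow> 'f::finite option \<Rightarrow> 'f option \<Rightarrow> bool"
    and pf :: "'f \<Rightarrow> 'w set \<Rightarrow> 'w set \<Rightarrow> bool"
    and M M' :: "'f option \<Rightarrow> 'w \<Rightarrow> real"
    and f' :: 'f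
  assumes "\<forall>w. strict_linear (pw w)"
    and "\<forall>f. strict_linear (pf f)"
    and "pseudo_matching M"
    and "stable pw pf M"
    and "pseudo_matching M'"
    and "\<forall>w. M (Some f') w = 0 \<longrightarrow> M' (Some f') w = 0"
    and "\<forall>g. g \<noteq> Some f' \<longrightarrow> M' g = M g"
  shows "\<not> (\<exists>f M''. f \<noteq> f' \<and> blocks pw pf M' f M'')"
proof
  assume "\<exists>f M''. f \<noteq> f' \<and> blocks pw pf M' f M''"
  then obtain f M'' where ff: "f \<noteq> f'" and bl: "blocks pw pf M' f M''" by blast
  define L where "L = acc_list pf f"
  define m where "m = M (Some f)"
  define a where "a = avail pw M (Some f)"
  have Ch_eq: "\<And>x. Ch pf f x = vec L (gt x 1 L)" unfolding Ch_def L_def by (simp add: ch_vec)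
  have M'f: "M' (Some f) = m" using assms(7) ff unfolding m_def by simp
  have Mu: "unit_vec M''" and Mfix: "M'' = Ch pf f (\<lambda>w. max (M'' w) (m w))"
    and Mne: "M'' \<noteq> m" and Mav: "\<forall>w. M'' w \<le> avail pw M' (Some f) w"
    using bl M'f unfolding blocks_def firm_prefers_def by auto
  have mfix: "m = Ch pf f m" and nob: "\<And>N. \<not> blocks pw pf M f N"
    using assms(4) unfolding stable_def m_def by auto
  have m01: "\<And>w. 0 \<le> m w \<and> m w \<le> 1" using assms(3) unfolding pseudo_matching_def unit_vec_def m_def by auto
  have M01: "\<And>w. 0 \<le> M'' w \<and> M'' w \<le> 1" using Mu unfolding unit_vec_def by auto
  have ma: "\<And>w. m w \<le> a w" unfolding m_def a_def using avail_ge[OF assms(3)] by blast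
  have B: "\<And>w. M'' w \<le> a w \<or> m w < a w"
  proof -
    fix w
    let ?I = "{g. pw w (Some f) g \<or> Some f = g}"
    show "M'' w \<le> a w \<or> m w < a w"
    proof (cases "Some f' \<in> ?I \<and> M (Some f') w < M' (Some f') w")
      case False
      have "avail pw M' (Some f) w \<le> a w" unfolding avail_def a_def
      proof (rule sum_mono)
        fix g assume "g \<in> ?I"
        then show "M' g w \<le> M g w" using False assms(7) by (cases "g = Some f'") auto
      qed
      then show ?thesis using Mav[rule_format, of w] by linarith
    next
      case True
      have nn: "0 \<le> M (Some f') w" using assms(3) unfolding pseudo_matching_def unit_vec_def by blast
      have "M (Some f') w \<noteq> 0" using True assms(6) by auto
      then have pos: "0 < M (Some f') w" using nn by linarith
      have "(\<Sum>g\<in>{Some f, Some f'}. M g w) \<le> a w" unfolding a_def avail_def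
        using True assms(3) unfolding pseudo_matching_def unit_vec_def
        by (intro sum_mono2) auto
      then have "m w + M (Some f') w \<le> a w" using ff unfolding m_def by simp
      then show ?thesis using pos by simp
    qed
  qed
  define D where "D = (\<lambda>w. a w - m w) ` {w. m w < a w}"
  define e where "e = Min (insert 1 D)"
  have finD: "finite (insert 1 D)" unfolding D_def by simp
  have e1: "e \<le> 1" unfolding e_def using finD by simp
  have e0: "0 < e" unfolding e_def using finD by (auto simp: Min_gr_iff D_def)
  have eD: "\<And>w. m w < a w \<Longrightarrow> e \<le> a w - m w" unfolding e_def D_def using finD by simp
  define y where "y = (\<lambda>w. (1-e) * m w + e * M'' w)"
  have ya: "\<And>w. y w \<le> a w"
  proof -
    fix w
    show "y w \<le> a w"
    proof (cases "M'' w \<le> a w")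
      case True
      have "(1-e) * m w + e * M'' w \<le> (1-e) * a w + e * a w"
        using e0 e1 True ma[of w] by (intro add_mono mult_left_mono) auto
      then show ?thesis unfolding y_def by (simp add: algebra_simps)
    next
      case False
      then have "m w < a w" using B by blast
      then have "e \<le> a w - m w" using eD by blast
      moreover have "e * (M'' w - m w) \<le> e * 1" using M01[of w] m01[of w] e0
        by (intro mult_left_mono) auto
      ultimately show ?thesis unfolding y_def by (simp add: algebra_simps)
    qed
  qed
  define x where "x = (\<lambda>w. max (y w) (m w))"
  have x01: "\<And>w. 0 \<le> x w \<and> x w \<le> 1"
  proof -
    fix w
    have "(1-e) * m w + e * M'' w \<le> (1-e) * 1 + e * 1"
      using e0 e1 M01[of w] m01[of w] by (intro add_mono mult_left_mono) auto
    then show "0 \<le> x w \<and> x w \<le> 1" unfolding x_def y_def using m01[of w] by auto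
  qed
  have xa: "\<And>w. x w \<le> a w" unfolding x_def using ya ma by simp
  define T where "T = gt m 1 L"
  define T2 where "T2 = gt (\<lambda>w. max (M'' w) (m w)) 1 L"
  have vT: "vec L T = m" using mfix Ch_eq unfolding T_def by simp
  have vT2: "vec L T2 = M''" using Mfix Ch_eq unfolding T2_def by simp
  have fT: "feas m 1 L T" unfolding T_def using m01 by (intro gt_feas) auto
  have fT2: "feas (\<lambda>w. max (M'' w) (m w)) 1 L T2" unfolding T2_def
    by (rule gt_feas) (use m01 in \<open>auto simp: le_max_iff_disj\<close>)
  have "feas (\<lambda>w. max (M'' w) (m w)) 1 L T" using feas_mono[OF fT] by simp
  then have lTT2: "lexle T T2" unfolding T2_def by (rule gt_max)
  have TT2: "T \<noteq> T2" using vT vT2 Mne by auto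
  have fT2': "feas M'' 1 L T2" using feas_vec[OF fT2] vT2 by simp
  define Y where "Y = map2 (\<lambda>x y. (1-e)*x + e*y) T T2"
  have fY: "feas y 1 L Y" unfolding Y_def y_def using feas_conv[OF fT fT2'] e0 e1 by simp
  have lenT: "length T = length T2" using fT fT2 unfolding feas_def by simp
  have lTY: "lexle T Y" unfolding Y_def using lex_conv[OF lenT lTT2 e0] .
  have YT: "Y \<noteq> T"
  proof
    assume "Y = T"
    then have "T = T2" using conv_eq[OF lenT e0] unfolding Y_def by blast
    then show False using TT2 by blast
  qed
  define G where "G = gt x 1 L"
  define N where "N = vec L G"
  have fG: "feas x 1 L G" unfolding G_def using x01 by (intro gt_feas) auto
  have fYx: "feas x 1 L Y" using feas_mono[OF fY] unfolding x_def by simp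
  have lYG: "lexle Y G" unfolding G_def using gt_max[OF fYx] .
  have NCh: "N = Ch pf f x" unfolding N_def G_def using Ch_eq by simp
  have Gnn: "\<forall>t\<in>set G. 0 \<le> t" using fG unfolding feas_def by blast
  have N0: "\<And>w. 0 \<le> N w" unfolding N_def using vec_nonneg[OF Gnn] .
  have Nx: "\<And>w. N w \<le> x w" unfolding N_def using fG unfolding feas_def by blast
  have Nfix: "N = Ch pf f (\<lambda>w. max (N w) (m w))"
  proof -
    define G2 where "G2 = gt (\<lambda>w. max (N w) (m w)) 1 L"
    have "feas (\<lambda>w. max (N w) (m w)) 1 L G"
      using feas_mono[OF feas_vec[OF fG]] unfolding N_def by simp
    then have l1: "lexle G G2" unfolding G2_def by (rule gt_max)
    have fG2: "feas (\<lambda>w. max (N w) (m w)) 1 L G2" unfolding G2_def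
      by (rule gt_feas) (use m01 in \<open>auto simp: le_max_iff_disj\<close>)
    have "\<forall>w. max (N w) (m w) \<le> x w"
    proof
      fix w
      have "N w \<le> x w" "m w \<le> x w" using Nx[of w] unfolding x_def by auto
      then show "max (N w) (m w) \<le> x w" by simp
    qed
    then have "feas x 1 L G2" using feas_mono[OF fG2] by blast
    then have l2: "lexle G2 G" unfolding G_def by (rule gt_max)
    have "length G = length G2" using fG fG2 unfolding feas_def by simp
    then have "G = G2" using lex_antisym l1 l2 by blast
    then show ?thesis using Ch_eq unfolding N_def G2_def by simp
  qed
  have Nm: "N \<noteq> m"
  proof
    assume "N = m"
    then have "feas m 1 L G" using feas_vec[OF fG] unfolding N_def by simp
    then have "lexle G T" unfolding T_def by (rule gt_max)
    have lens: "length Y = length G" "length G = length T" "length T = length Y"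
      using fY fG fT unfolding feas_def by auto
    have "lexle Y T" using \<open>lexle G T\<close> lYG lex_trans lens by blast
    then have "Y = T" using lex_antisym[OF lens(3) lTY] by blast
    then show False using YT by simp
  qed
  have "blocks pw pf M f N"
  proof -
    have "\<forall>w. 0 \<le> N w \<and> N w \<le> 1" using N0 Nx x01 by (meson order_trans)
    moreover have "\<forall>w. N w \<le> avail pw M (Some f) w" using Nx xa unfolding a_def by (meson order_trans)
    ultimately show ?thesis unfolding blocks_def firm_prefers_def unit_vec_def
      using Nfix Nm unfolding m_def by blast
  qed
  then show False using nob by blast
qed

end
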